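(* Let $p_1,\ldots,p_n\in\mathscr{A}_0$ with $p_i(0)>0$ for all $i$. If there exists $\theta\in[0,\pi/2)$ such that for all $i$ $$\mathrm{Re}\Big(e^{j\theta}\big(1+p_i(j\omega)/(j\omega)\big)\Big)>0\quad\forall\,\omega>0,$$ then there exists $h\in\mathrm{PR}\cap\mathscr{A}_0$ such that $p_1,\ldots,p_n\in\mathcal{P}_h$.
   Context: $\mathscr{H}_\infty$: functions analytic and bounded on $\mathrm{Re}(s)>0$; $\mathscr{A}_0$: those in $\mathscr{H}_\infty$ extending continuously to $j\mathbb{R}\cup\{\infty\}$. $g\in\mathrm{PR}$ if $g$ is analytic in $\mathrm{Re}(s)>0$, real for positive real $s$, and $\mathrm{Re}(g(s))\ge0$ for $\mathrm{Re}(s)>0$; $g\in\mathrm{ESPR}$ if moreover $g\in\mathscr{A}_0$ and $g-\epsilon\in\mathrm{PR}$ for some $\epsilon>0$. $\mathcal{P}_h:=\{p\in\mathscr{H}_\infty: p(0)\ne0,\ h(s)(1+p(s)/s)\in\mathrm{ESPR}\}$. Transfer functions are assumed real on the positive real axis. *)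

theory Defs
  imports "HOL-Analysis.Analysis"
begin

definition RHP :: "complex set" where
  "RHP = {s. Re s > 0}"

definition cRHP :: "complex set" where
  "cRHP = {s. Re s \<ge> 0}"

definition Hinf :: "(complex \<Rightarrow> complex) \<Rightarrow> bool" where
  "Hinf g \<longleftrightarrow> g holomorphic_on RHP \<and> bounded (g ` RHP)"

definition A0 :: "(complex \<Rightarrow> complex) \<Rightarrow> bool" where
  "A0 g \<longleftrightarrow> Hinf g \<and>
     (\<exists>G. (\<forall>s\<in>RHP. G s = g s) \<and> continuous_on cRHP G \<and>
          (\<exists>L. (G \<longlongrightarrow> L) (inf at_infinity (principal cRHP))))"

text \<open>Boundary value of g at a point z of the closed half-plane
  (the value of the continuous extension).\<close>
definition bval :: "(complex \<Rightarrow> complex) \<Rightarrow> complex \<Rightarrow> complex" where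
  "bval g z = Lim (at z within RHP) g"

definition PR :: "(complex \<Rightarrow> complex) \<Rightarrow> bool" where
  "PR g \<longleftrightarrow> g holomorphic_on RHP \<and> (\<forall>x::real. x > 0 \<longrightarrow> g (of_real x) \<in> \<real>) \<and>
     (\<forall>s\<in>RHP. Re (g s) \<ge> 0)"

definition ESPR :: "(complex \<Rightarrow> complex) \<Rightarrow> bool" where
  "ESPR g \<longleftrightarrow> PR g \<and> A0 g \<and> (\<exists>\<epsilon>::real. \<epsilon> > 0 \<and> PR (\<lambda>s. g s - of_real \<epsilon>))"

definition Pset :: "(complex \<Rightarrow> complex) \<Rightarrow> (complex \<Rightarrow> complex) set" where
  "Pset h = {p. Hinf p \<and> bval p 0 \<noteq> 0 \<and> ESPR (\<lambda>s. h s * (1 + p s / s))}"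

end

theory Submission
  imports Defs "HOL-Complex_Analysis.Complex_Analysis"
begin

abbreviation FI :: "complex filter" where
  "FI \<equiv> inf at_infinity (principal cRHP)"

lemma eventually_FI:
  "eventually P FI \<longleftrightarrow> (\<exists>R. \<forall>s\<in>cRHP. norm s \<ge> R \<longrightarrow> P s)"
  unfolding eventually_inf_principal eventually_at_infinity by blast

lemma RHP_sub: "RHP \<subseteq> cRHP" by (auto simp: RHP_def cRHP_def)

lemma open_RHP: "open RHP"
  unfolding RHP_def by (simp add: open_halfspace_Re_gt)

lemma closed_cRHP: "closed cRHP"
  unfolding cRHP_def by (simp add: closed_halfspace_Re_ge)

lemma cRHP_islimpt: assumes "z \<in> cRHP" shows "z islimpt RHP"
proof (rule islimptI)
  fix T assume T: "z \<in> T" "open T"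
  then obtain e where e: "e > 0" "ball z e \<subseteq> T" using open_contains_ball by blast
  let ?y = "z + of_real (e/2)"
  have "?y \<in> RHP" using assms e by (auto simp: RHP_def cRHP_def)
  moreover have "?y \<in> T" using e by (auto simp: dist_norm)
  moreover have "?y \<noteq> z" using e by simp
  ultimately show "\<exists>y\<in>RHP. y \<in> T \<and> y \<noteq> z" by blast
qed

lemma closure_RHP: "closure RHP = cRHP"
proof
  show "closure RHP \<subseteq> cRHP" using RHP_sub closed_cRHP closure_minimal by blast
  show "cRHP \<subseteq> closure RHP" using cRHP_islimpt closure_def by blast
qed

lemma bval_eq:
  assumes "continuous_on cRHP G" "\<forall>s\<in>RHP. G s = g s" "z \<in> cRHP"
  shows "bval g z = G z"
proof -
  have "(G \<longlongrightarrow> G z) (at z within cRHP)"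
    using assms continuous_on_def by blast
  then have "(G \<longlongrightarrow> G z) (at z within RHP)"
    using RHP_sub tendsto_within_subset by blast
  then have "(g \<longlongrightarrow> G z) (at z within RHP)"
    by (rule Lim_transform_within[where d=1]) (use assms in auto)
  moreover have "at z within RHP \<noteq> bot"
    using cRHP_islimpt[OF assms(3)] by (simp add: trivial_limit_within)
  ultimately show ?thesis unfolding bval_def by (simp add: tendsto_Lim)
qed

lemma bounded_ext:
  fixes G :: "complex \<Rightarrow> complex"
  assumes "continuous_on cRHP G" "(G \<longlongrightarrow> L) FI"
  shows "bounded (G ` cRHP)"
proof -
  have "eventually (\<lambda>s. dist (G s) L < 1) FI"
    using assms(2) tendstoD by fastforce
  then obtain R where R: "\<forall>s\<in>cRHP. norm s \<ge> R \<longrightarrow> dist (G s) L < 1"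
    unfolding eventually_FI by blast
  have "compact (cRHP \<inter> cball 0 R)"
    by (rule closed_Int_compact[OF closed_cRHP compact_cball])
  then have "compact (G ` (cRHP \<inter> cball 0 R))"
    by (metis compact_continuous_image continuous_on_subset assms(1) inf_le1)
  then have b1: "bounded (G ` (cRHP \<inter> cball 0 R))" by (rule compact_imp_bounded)
  have b2: "bounded (G ` (cRHP - cball 0 R))"
    unfolding bounded_iff
  proof (intro exI[of _ "norm L + 1"] ballI)
    fix w assume "w \<in> G ` (cRHP - cball 0 R)"
    then obtain s where s: "s\<in>cRHP" "norm s > R" "w = G s" by auto
    then have "dist (G s) L < 1" using R by auto
    then show "norm w \<le> norm L + 1" using s norm_triangle_sub[of "G s" L]
      by (simp add: dist_norm)
  qed
  have "G ` cRHP \<subseteq> G ` (cRHP \<inter> cball 0 R) \<union> G ` (cRHP - cball 0 R)" by blast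
  then show ?thesis using b1 b2 bounded_Un bounded_subset by blast
qed

lemma iomega_cRHP [simp]: "\<i> * of_real w \<in> cRHP"
  by (simp add: cRHP_def)

lemma filterlim_iomega_top: "filterlim (\<lambda>w::real. \<i> * of_real w) FI at_top"
  unfolding filterlim_inf filterlim_principal
proof
  have e: "(\<lambda>w::real. norm (\<i> * complex_of_real w)) = abs" by (auto simp: norm_mult)
  show "filterlim (\<lambda>w::real. \<i> * of_real w) at_infinity at_top"
    unfolding filterlim_at_infinity_conv_norm_at_top
    by (subst e) (rule filterlim_abs_real)
qed simp

lemma filterlim_abs_bot: "filterlim (abs::real\<Rightarrow>real) at_top at_bot"
  by (metis (no_types, lifting) ext at_bot_le_at_infinity filterlim_mono
    filterlim_norm_at_top order_refl real_norm_def)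

lemma filterlim_iomega_bot: "filterlim (\<lambda>w::real. \<i> * of_real w) FI at_bot"
  unfolding filterlim_inf filterlim_principal
proof
  have e: "(\<lambda>w::real. norm (\<i> * complex_of_real w)) = abs" by (auto simp: norm_mult)
  show "filterlim (\<lambda>w::real. \<i> * of_real w) at_infinity at_bot"
    unfolding filterlim_at_infinity_conv_norm_at_top
    by (subst e) (rule filterlim_abs_bot)
qed simp

lemma hp_max:
  fixes g G :: "complex \<Rightarrow> complex"
  assumes hol: "g holomorphic_on RHP" and cont: "continuous_on cRHP G"
    and eq: "\<forall>s\<in>RHP. G s = g s" and lim: "(G \<longlongrightarrow> L) FI"
    and bd: "\<forall>w::real. Re (G (\<i> * of_real w)) \<ge> c"
  shows "\<forall>s\<in>RHP. Re (g s) \<ge> c"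
proof (intro ballI, rule ccontr)
  fix s0 assume s0: "s0 \<in> RHP" "\<not> c \<le> Re (g s0)"
  define d where "d = c - Re (g s0)"
  have d: "d > 0" using s0 d_def by auto
  have limRe: "((\<lambda>s. Re (G s)) \<longlongrightarrow> Re L) FI" using lim by (rule tendsto_Re)
  have "((\<lambda>w::real. Re (G (\<i> * of_real w))) \<longlongrightarrow> Re L) at_top"
    by (rule filterlim_compose[OF limRe filterlim_iomega_top])
  then have "c \<le> Re L"
    by (rule tendsto_lowerbound) (use bd in auto)
  then have "c - d/2 < Re L" using d by linarith
  then have "eventually (\<lambda>s. Re (G s) > c - d/2) FI"
    by (rule order_tendstoD(1)[OF limRe])
  then obtain R where R: "\<forall>s\<in>cRHP. norm s \<ge> R \<longrightarrow> Re (G s) > c - d/2"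
    unfolding eventually_FI by blast
  define R' where "R' = max R (norm s0 + 1)"
  define S where "S = RHP \<inter> ball 0 R'"
  have openS: "open S" unfolding S_def using open_RHP by auto
  have s0S: "s0 \<in> S" using s0 unfolding S_def R'_def by auto
  have clS: "closure S \<subseteq> cRHP"
    using closure_mono[of S RHP] closure_RHP unfolding S_def by auto
  have "Re (- G s0) \<le> - (c - d/2)"
  proof (rule maximum_real_frontier[where S=S and f="\<lambda>s. - G s" and \<xi>=s0])
    have "g holomorphic_on S" using hol holomorphic_on_subset S_def by blast
    then have "G holomorphic_on S"
      by (rule holomorphic_transform) (use eq S_def in auto)
    then show "(\<lambda>s. - G s) holomorphic_on interior S"
      using openS by (simp add: interior_open holomorphic_on_minus)
    show "continuous_on (closure S) (\<lambda>s. - G s)"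
      using continuous_on_subset[OF cont clS] by (intro continuous_intros)
    show "bounded S" unfolding S_def by auto
    show "s0 \<in> S" by fact
    fix z assume z: "z \<in> frontier S"
    have zz: "z \<in> closure S" "z \<notin> S" using z openS
      by (simp_all add: frontier_def interior_open)
    then have zc: "z \<in> cRHP" "z \<notin> S" using clS by auto
    have zb: "norm z \<le> R'"
    proof -
      have "closure S \<subseteq> cball 0 R'" unfolding S_def
        by (rule closure_minimal) auto
      then show ?thesis using zz by auto
    qed
    show "Re (- G z) \<le> - (c - d / 2)"
    proof (cases "Re z = 0")
      case True
      then have "z = \<i> * of_real (Im z)" by (simp add: complex_eq_iff)
      then have "Re (G z) \<ge> c" using bd by metis
      then show ?thesis using d by simp
    next
      case False
      then have "z \<in> RHP" using zc by (auto simp: cRHP_def RHP_def)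
      then have "norm z \<ge> R'" using zc unfolding S_def by auto
      then have "Re (G z) > c - d/2" using R zc R'_def by auto
      then show ?thesis by simp
    qed
  qed
  then have "Re (g s0) \<ge> c - d/2" using eq s0 by simp
  then show False using d d_def by linarith
qed

lemma cnj_RHP: "cnj ` RHP = RHP"
  by (auto simp: RHP_def image_iff intro!: exI[of _ "cnj x" for x])

lemma cnj_cRHP: "s \<in> cRHP \<Longrightarrow> cnj s \<in> cRHP"
  by (auto simp: cRHP_def)

lemma reflect:
  assumes hol: "p holomorphic_on RHP" and real: "\<forall>x::real. x>0 \<longrightarrow> p (of_real x) \<in> \<real>"
  shows "\<forall>s\<in>RHP. p (cnj s) = cnj (p s)"
proof
  fix s assume s: "s \<in> RHP"
  have h2: "(cnj \<circ> p \<circ> cnj) holomorphic_on RHP"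
    by (rule holomorphic_on_compose_cnj_cnj) (use hol cnj_RHP open_RHP in auto)
  have holf: "(\<lambda>z. p z - (cnj \<circ> p \<circ> cnj) z) holomorphic_on RHP"
    by (intro holomorphic_intros hol h2)
  have conv: "convex RHP" unfolding RHP_def by (rule convex_halfspace_Re_gt)
  have "(\<lambda>z. p z - (cnj \<circ> p \<circ> cnj) z) (cnj s) = 0"
  proof (rule analytic_continuation[OF holf open_RHP convex_connected[OF conv],
        where U="of_real ` {0<..}" and \<xi>=1])
    show "of_real ` {0<..} \<subseteq> RHP" by (auto simp: RHP_def)
    show "(1::complex) \<in> RHP" by (simp add: RHP_def)
    show "(1::complex) islimpt of_real ` {0<..}"
    proof (rule islimpt_approachable[THEN iffD2], intro allI impI)
      fix e :: real assume e: "e > 0"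
      show "\<exists>x'\<in>(of_real ` {0<..} :: complex set). x' \<noteq> 1 \<and> dist x' 1 < e"
      proof -
        have "dist (complex_of_real (1 + e/2)) 1 = norm (complex_of_real (e/2))"
          by (simp add: dist_norm)
        also have "\<dots> = e/2" using e by simp
        finally have n: "complex_of_real (1 + e/2) \<noteq> 1 \<and> dist (complex_of_real (1 + e/2)) 1 < e"
          using e by (auto simp del: of_real_add)
        have m: "complex_of_real (1 + e/2) \<in> of_real ` {0<..}" using e by (intro imageI) auto
        show ?thesis using m n by blast
      qed
    qed
    show "cnj s \<in> RHP" using s by (auto simp: RHP_def)
    fix z assume "z \<in> (of_real ` {0<..} :: complex set)"
    then obtain x :: real where x: "x > 0" "z = of_real x" by auto
    then have "p z \<in> \<real>" using real by auto
    then show "p z - (cnj \<circ> p \<circ> cnj) z = 0" using x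
      by (simp add: Reals_cnj_iff)
  qed
  then show "p (cnj s) = cnj (p s)" by simp
qed

lemma reflect_ext:
  assumes cont: "continuous_on cRHP P" and eq: "\<forall>s\<in>RHP. P s = p s"
    and refl: "\<forall>s\<in>RHP. p (cnj s) = cnj (p s)"
  shows "\<forall>z\<in>cRHP. P (cnj z) = cnj (P z)"
proof
  fix z assume z: "z \<in> cRHP"
  have c1: "continuous_on cRHP (\<lambda>s. P (cnj s))"
    by (rule continuous_on_compose2[OF cont continuous_on_cnj]) (auto simp: cRHP_def)
  have c2: "continuous_on cRHP (\<lambda>s. cnj (P s))"
    by (intro continuous_intros cont)
  have l1: "((\<lambda>s. P (cnj s)) \<longlongrightarrow> P (cnj z)) (at z within RHP)"
    using c1 z RHP_sub continuous_on_def tendsto_within_subset by blast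
  have l2: "((\<lambda>s. cnj (P s)) \<longlongrightarrow> cnj (P z)) (at z within RHP)"
    using c2 z RHP_sub continuous_on_def tendsto_within_subset by blast
  have l1': "((\<lambda>s. cnj (P s)) \<longlongrightarrow> P (cnj z)) (at z within RHP)"
  proof (rule Lim_transform_within[OF l1 zero_less_one])
    fix s assume "s \<in> RHP" 
    moreover then have "cnj s \<in> RHP" by (auto simp: RHP_def)
    ultimately show "P (cnj s) = cnj (P s)" using eq refl by simp
  qed
  have "at z within RHP \<noteq> bot"
    using cRHP_islimpt[OF z] by (simp add: trivial_limit_within)
  then show "P (cnj z) = cnj (P z)" using tendsto_unique l1' l2 by blast
qed


definition kk :: "real \<Rightarrow> real \<Rightarrow> real \<Rightarrow> complex \<Rightarrow> complex" where
  "kk a b \<gamma> s = exp (- of_real (1-\<gamma>) * Ln (s + of_real a) - of_real \<gamma> * Ln (s + of_real b))"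

lemma shift_nonpos: "0 \<le> Re s \<Longrightarrow> (a::real) > 0 \<Longrightarrow> s + of_real a \<notin> \<real>\<^sub>\<le>\<^sub>0"
  by (auto simp: complex_nonpos_Reals_iff)

lemma kk_hol: "a > 0 \<Longrightarrow> b > 0 \<Longrightarrow> kk a b \<gamma> holomorphic_on RHP"
  unfolding kk_def
  by (intro holomorphic_intros) (auto simp: RHP_def complex_nonpos_Reals_iff)

lemma kk_cont: "a > 0 \<Longrightarrow> b > 0 \<Longrightarrow> continuous_on cRHP (kk a b \<gamma>)"
  unfolding kk_def
  by (intro continuous_intros) (auto simp: cRHP_def complex_nonpos_Reals_iff)

lemma kk_real: assumes "a > 0" "b > 0" "x \<ge> 0"
  shows "kk a b \<gamma> (of_real x) = of_real (exp (- (1-\<gamma>) * ln (x + a) - \<gamma> * ln (x + b)))"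
proof -
  have "Ln (complex_of_real x + complex_of_real a) = of_real (ln (x + a))"
    using assms by (metis Ln_of_real add_nonneg_pos of_real_add)
  moreover have "Ln (complex_of_real x + complex_of_real b) = of_real (ln (x + b))"
    using assms by (metis Ln_of_real add_nonneg_pos of_real_add)
  ultimately have "- of_real (1-\<gamma>) * Ln (complex_of_real x + of_real a) - of_real \<gamma> * Ln (of_real x + of_real b)
     = complex_of_real (- (1-\<gamma>) * ln (x + a) - \<gamma> * ln (x + b))" by simp
  then show ?thesis unfolding kk_def by (simp only: exp_of_real)
qed

lemma kk_cnj: assumes "a > 0" "b > 0" "0 \<le> Re s"
  shows "kk a b \<gamma> (cnj s) = cnj (kk a b \<gamma> s)"
proof -
  have "cnj (Ln (s + of_real a)) = Ln (cnj s + of_real a)"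
    using cnj_Ln[OF shift_nonpos[OF assms(3,1)]] by simp
  moreover have "cnj (Ln (s + of_real b)) = Ln (cnj s + of_real b)"
    using cnj_Ln[OF shift_nonpos[OF assms(3,2)]] by simp
  ultimately show ?thesis unfolding kk_def by (simp add: exp_cnj)
qed

lemma Im_Ln_shift: assumes "a > 0"
  shows "Im (Ln (\<i> * of_real w + of_real a)) = arctan (w / a)"
proof -
  have "\<i> * of_real w + of_real a \<noteq> 0" using assms by (auto simp: complex_eq_iff)
  then have "Im (Ln (\<i> * of_real w + of_real a)) = Arg (\<i> * of_real w + of_real a)"
    by (simp add: Arg_eq_Im_Ln)
  also have "\<dots> = arctan (w / a)" using assms by (subst arg_conv_arctan) auto
  finally show ?thesis .
qed

lemma kk_boundary: assumes "a > 0" "b > 0"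
  shows "\<exists>\<rho>>0. Re (kk a b \<gamma> (\<i> * of_real w) * z) =
     \<rho> * (cos ((1-\<gamma>) * arctan (w/a) + \<gamma> * arctan (w/b)) * Re z
        + sin ((1-\<gamma>) * arctan (w/a) + \<gamma> * arctan (w/b)) * Im z)"
proof -
  define E where "E = - of_real (1-\<gamma>) * Ln (\<i> * of_real w + of_real a) - of_real \<gamma> * Ln (\<i> * of_real w + of_real b)"
  define \<phi> where "\<phi> = (1-\<gamma>) * arctan (w/a) + \<gamma> * arctan (w/b)"
  have ImE: "Im E = - \<phi>"
    unfolding E_def \<phi>_def using Im_Ln_shift[OF assms(1)] Im_Ln_shift[OF assms(2)] by (simp add: algebra_simps)
  have "kk a b \<gamma> (\<i> * of_real w) = exp E" unfolding kk_def E_def ..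
  also have "\<dots> = exp (Re E) * cis (- \<phi>)" by (simp add: exp_eq_polar ImE)
  finally have "Re (kk a b \<gamma> (\<i> * of_real w) * z) = exp (Re E) * (cos \<phi> * Re z + sin \<phi> * Im z)"
    by (simp add: cis.code algebra_simps)
  then show ?thesis unfolding \<phi>_def by (intro exI[of _ "exp (Re E)"]) auto
qed

lemma Ln_split: assumes "c > 0" "s \<in> cRHP" "s \<noteq> 0"
  shows "Ln (s + of_real c) = Ln s + Ln (1 + of_real c / s)"
proof -
  have Re1: "Re (1 + of_real c / s) > 0"
  proof -
    have "Re (of_real c / s) = c * Re s / ((Re s)^2 + (Im s)^2)" by (simp add: Re_divide)
    also have "\<dots> \<ge> 0" using assms by (auto simp: cRHP_def intro!: divide_nonneg_nonneg)
    finally show ?thesis by simp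
  qed
  have nz: "1 + of_real c / s \<noteq> 0"
  proof
    assume "1 + of_real c / s = 0"
    then have "Re (1 + of_real c / s) = 0" by simp
    with Re1 show False by simp
  qed
  have i1: "\<bar>Im (Ln s)\<bar> \<le> pi/2" using Re_Ln_pos_le[OF assms(3)] assms(2) by (simp add: cRHP_def)
  have i2: "\<bar>Im (Ln (1 + of_real c / s))\<bar> < pi/2" using Re_Ln_pos_lt_imp[OF Re1] .
  have "s + of_real c = s * (1 + of_real c / s)" using assms(3) by (simp add: field_simps)
  then have "Ln (s + of_real c) = Ln (s * (1 + of_real c / s))" by simp
  also have "\<dots> = Ln s + Ln (1 + of_real c / s)"
    by (rule Ln_times_simple[OF assms(3) nz]) (use i1 i2 in linarith)+
  finally show ?thesis .
qed

lemma kk_lim: assumes a: "a > 0" and b: "b > 0"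
  shows "((\<lambda>s. s * kk a b \<gamma> s) \<longlongrightarrow> 1) FI" "(kk a b \<gamma> \<longlongrightarrow> 0) FI"
proof -
  define H where "H s = exp (- of_real (1-\<gamma>) * Ln (1 + of_real a / s) - of_real \<gamma> * Ln (1 + of_real b / s))" for s
  have ev: "eventually (\<lambda>s. s \<in> cRHP \<and> s \<noteq> 0) FI"
    unfolding eventually_FI by (rule exI[of _ 1]) auto
  have eqH: "s * kk a b \<gamma> s = H s" if "s \<in> cRHP \<and> s \<noteq> 0" for s
  proof -
    have "s * kk a b \<gamma> s = exp (Ln s) * kk a b \<gamma> s" using that by simp
    also have "\<dots> = exp (Ln s + (- of_real (1-\<gamma>) * Ln (s + of_real a) - of_real \<gamma> * Ln (s + of_real b)))"
      unfolding kk_def by (simp add: exp_add)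
    also have "\<dots> = H s"
      unfolding H_def Ln_split[OF a that[THEN conjunct1] that[THEN conjunct2]]
        Ln_split[OF b that[THEN conjunct1] that[THEN conjunct2]]
      by (simp add: algebra_simps)
    finally show ?thesis .
  qed
  have "((\<lambda>s::complex. of_real a / s) \<longlongrightarrow> 0) at_infinity"
    using tendsto_divide_0[OF tendsto_const[of "of_real a"] filterlim_ident] by simp
  moreover have "((\<lambda>s::complex. of_real b / s) \<longlongrightarrow> 0) at_infinity"
    using tendsto_divide_0[OF tendsto_const[of "of_real b"] filterlim_ident] by simp
  ultimately have "(H \<longlongrightarrow> exp (- of_real (1-\<gamma>) * Ln (1 + 0) - of_real \<gamma> * Ln (1 + 0))) at_infinity"
    unfolding H_def by (intro tendsto_intros) auto
  then have "(H \<longlongrightarrow> 1) FI" by (simp add: tendsto_mono[OF inf_le1])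
  then show l1: "((\<lambda>s. s * kk a b \<gamma> s) \<longlongrightarrow> 1) FI"
    by (rule tendsto_cong[THEN iffD2, rotated]) (use eventually_mono[OF ev] eqH in auto)
  have "((\<lambda>s. (s * kk a b \<gamma> s) * inverse s) \<longlongrightarrow> 1 * 0) FI"
    by (intro tendsto_mult l1 tendsto_mono[OF inf_le1 tendsto_inverse_0])
  then have t: "((\<lambda>s. (s * kk a b \<gamma> s) * inverse s) \<longlongrightarrow> 0) FI" by simp
  have e2: "eventually (\<lambda>s. (s * kk a b \<gamma> s) * inverse s = kk a b \<gamma> s) FI"
    by (rule eventually_mono[OF ev]) auto
  show "(kk a b \<gamma> \<longlongrightarrow> 0) FI" using tendsto_cong[OF e2] t by simp
qed


lemma abs_sin_diff: fixes u v :: real shows "\<bar>sin u - sin v\<bar> \<le> \<bar>u - v\<bar>"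
proof -
  have "\<bar>sin u - sin v\<bar> = 2 * \<bar>sin ((u - v) / 2)\<bar> * \<bar>cos ((u + v) / 2)\<bar>"
    by (simp add: sin_diff_sin abs_mult)
  also have "\<dots> \<le> 2 * \<bar>(u - v) / 2\<bar> * 1"
    by (intro mult_mono abs_sin_x_le_abs_x) auto
  finally show ?thesis by simp
qed

lemma abs_cos_diff: fixes u v :: real shows "\<bar>cos u - cos v\<bar> \<le> \<bar>u - v\<bar>"
proof -
  have "\<bar>cos u - cos v\<bar> = 2 * \<bar>sin ((u + v) / 2)\<bar> * \<bar>sin ((v - u) / 2)\<bar>"
    by (simp add: cos_diff_cos abs_mult)
  also have "\<dots> \<le> 2 * 1 * \<bar>(v - u) / 2\<bar>"
    by (intro mult_mono abs_sin_x_le_abs_x) auto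
  finally show ?thesis by simp
qed

lemma comb1:
  fixes A B x y t f :: real
  assumes "B > 0" "A = cos t" "B = sin t" "0 < f" "f \<le> t" "t < pi" "x > 0" "A * x + B * y > 0"
  shows "cos f * x + sin f * y > 0"
proof -
  have s1: "sin (t - f) \<ge> 0" using assms by (intro sin_ge_zero) auto
  have s2: "sin f > 0" using assms by (intro sin_gt_zero) auto
  have "B * (cos f * x + sin f * y) = sin (t - f) * x + sin f * (A * x + B * y)"
    using assms by (simp add: sin_diff algebra_simps)
  also have "\<dots> > 0"
  proof -
    have "sin (t - f) * x \<ge> 0" using s1 assms by simp
    moreover have "sin f * (A * x + B * y) > 0" using s2 assms by simp
    ultimately show ?thesis by linarith
  qed
  finally show ?thesis using assms(1) by (simp add: zero_less_mult_iff)
qed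

lemma comb2:
  fixes A B x y t f :: real
  assumes "A > 0" "A = cos t" "B = sin t" "t \<le> f" "f < pi/2" "0 \<le> t" "y > 0" "A * x + B * y > 0"
  shows "cos f * x + sin f * y > 0"
proof -
  have s1: "sin (f - t) \<ge> 0" using assms by (intro sin_ge_zero) auto
  have c: "cos f > 0" using assms by (intro cos_gt_zero_pi) auto
  have "A * (cos f * x + sin f * y) = cos f * (A * x + B * y) + sin (f - t) * y"
    using assms by (simp add: sin_diff algebra_simps)
  also have "\<dots> > 0"
  proof -
    have "sin (f - t) * y \<ge> 0" using s1 assms by simp
    moreover have "cos f * (A * x + B * y) > 0" using c assms by simp
    ultimately show ?thesis by linarith
  qed
  finally show ?thesis using assms(1) by (simp add: zero_less_mult_iff)
qed

lemma comb3:
  fixes A B x y t f e :: real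
  assumes "A = cos t" "B = sin t" "\<bar>f - t\<bar> \<le> e" "A * x + B * y > e * (\<bar>x\<bar> + \<bar>y\<bar>)"
  shows "cos f * x + sin f * y > 0"
proof -
  have "\<bar>(cos f - A) * x\<bar> \<le> e * \<bar>x\<bar>"
    unfolding abs_mult using abs_cos_diff[of f t] assms by (intro mult_right_mono) auto
  moreover have "\<bar>(sin f - B) * y\<bar> \<le> e * \<bar>y\<bar>"
    unfolding abs_mult using abs_sin_diff[of f t] assms by (intro mult_right_mono) auto
  ultimately show ?thesis using assms(4) by (simp add: algebra_simps abs_le_iff)
qed

definition phi :: "real \<Rightarrow> real \<Rightarrow> real \<Rightarrow> real \<Rightarrow> real" where
  "phi g a b w = (1-g) * arctan (w/a) + g * arctan (w/b)"

lemma core: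
  fixes Q :: "real \<Rightarrow> complex" and \<theta> M :: real
  assumes cont: "continuous_on UNIV Q" and bnd: "\<forall>w. norm (Q w) \<le> M"
    and q0: "Re (Q 0) > 0" and th: "0 \<le> \<theta>" "\<theta> < pi/2"
    and cnd: "\<forall>w>0. sin \<theta> * Re (Q w) + cos \<theta> * (w + Im (Q w)) > 0"
  shows "eventually (\<lambda>a. eventually (\<lambda>b. \<forall>w\<ge>0.
     cos (phi (2*\<theta>/pi) a b w) * Re (Q w) + sin (phi (2*\<theta>/pi) a b w) * (w + Im (Q w)) > 0) at_top) (at_right 0)"
proof -
  define \<gamma> where "\<gamma> = 2*\<theta>/pi"
  define A where "A = sin \<theta>"
  define B where "B = cos \<theta>"
  define t where "t = pi/2 - \<theta>"
  define x where "x w = Re (Q w)" for w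
  define y where "y w = w + Im (Q w)" for w
  have B0: "B > 0" unfolding B_def using th by (intro cos_gt_zero_pi) auto
  have A0: "A \<ge> 0" unfolding A_def using th by (intro sin_ge_zero) auto
  have A1: "A \<le> 1" "B \<le> 1" unfolding A_def B_def by auto
  have At: "A = cos t" "B = sin t" unfolding A_def B_def t_def by (simp_all add: cos_diff sin_diff)
  have g0: "0 \<le> \<gamma>" unfolding \<gamma>_def using th by simp
  have g1: "\<gamma> < 1" unfolding \<gamma>_def using th pi_gt_zero by (simp add: field_simps)
  have tg: "(1-\<gamma>)*(pi/2) = t" unfolding \<gamma>_def t_def by (simp add: field_simps)
  have t0: "0 < t" "t \<le> pi/2" unfolding t_def using th by auto
  have M0: "M \<ge> 0" using bnd norm_ge_zero order_trans by blast
  have bx: "\<bar>x w\<bar> \<le> M" for w unfolding x_def using abs_Re_le_cmod bnd order_trans by blast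
  have bi: "\<bar>Im (Q w)\<bar> \<le> M" for w using abs_Im_le_cmod bnd order_trans by blast
  have cnd': "A * x w + B * y w > 0" if "w > 0" for w
    using cnd that unfolding A_def B_def x_def y_def by blast
  have "isCont Q 0" using cont continuous_on_eq_continuous_at open_UNIV by blast
  then have "((\<lambda>w. Re (Q w)) \<longlongrightarrow> Re (Q 0)) (at 0)"
    by (intro tendsto_Re) (simp add: isCont_def)
  then have "eventually (\<lambda>w. Re (Q w) > 0) (at 0)" using q0 order_tendstoD(1) by blast
  then obtain d where d: "d > 0" "\<forall>w. w \<noteq> 0 \<and> dist w 0 < d \<longrightarrow> Re (Q w) > 0"
    unfolding eventually_at by auto
  define w1 where "w1 = d/2"
  have w1: "w1 > 0" using d w1_def by simp
  have xpos: "x w > 0" if "0 \<le> w" "w \<le> w1" for w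
  proof (cases "w = 0")
    case True then show ?thesis using q0 x_def by simp
  next
    case False then show ?thesis using d that w1_def unfolding x_def by (auto simp: dist_norm)
  qed
  define w3 where "w3 = 6*M/B + 1 + w1"
  have w3: "w1 < w3" "6*M < B * w3"
  proof -
    have "6*M/B \<ge> 0" using M0 B0 by simp
    then show "w1 < w3" unfolding w3_def by linarith
    have "B * w3 = 6*M + B + B * w1" unfolding w3_def using B0 by (simp add: field_simps)
    moreover have "B * w1 > 0" using B0 w1 by simp
    ultimately show "6*M < B * w3" using B0 by linarith
  qed
  define f where "f w = A * x w + B * y w" for w
  have contf: "continuous_on {w1..w3} f" unfolding f_def x_def y_def
    by (intro continuous_intros continuous_on_subset[OF cont]) auto
  obtain wm where wm: "wm \<in> {w1..w3}" "\<forall>w\<in>{w1..w3}. f wm \<le> f w"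
    using continuous_attains_inf[OF compact_Icc _ contf] w3 by auto
  define c where "c = f wm"
  have c0: "c > 0" unfolding c_def f_def using wm w1 cnd' by auto
  define K where "K = w3 + 2*M + 1"
  have K0: "K > 0" unfolding K_def using w3 w1 M0 by simp
  define \<eta> where "\<eta> = min (c/(2*K)) (B/2)"
  have eta0: "\<eta> > 0" unfolding \<eta>_def using c0 K0 B0 by simp
  have P1: "f w > \<eta> * (\<bar>x w\<bar> + \<bar>y w\<bar>)" if "w \<ge> w1" for w
  proof (cases "w \<le> w3")
    case True
    have s: "\<bar>x w\<bar> + \<bar>y w\<bar> \<le> K"
      using bx[of w] bi[of w] True that w1 unfolding y_def K_def by (auto simp: abs_le_iff)
    have "\<eta> * (\<bar>x w\<bar> + \<bar>y w\<bar>) \<le> (c/(2*K)) * K"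
      by (intro mult_mono s) (auto simp: \<eta>_def c0 K0 less_imp_le)
    also have "\<dots> = c/2" using K0 by simp
    also have "\<dots> < c" using c0 by simp
    also have "c \<le> f w" unfolding c_def using wm True that by auto
    finally show ?thesis .
  next
    case False
    have xy: "\<bar>x w\<bar> + \<bar>y w\<bar> \<le> w + 2*M"
      using bx[of w] bi[of w] that w1 unfolding y_def by (auto simp: abs_le_iff)
    have "\<eta> * (\<bar>x w\<bar> + \<bar>y w\<bar>) \<le> (B/2) * (w + 2*M)"
      by (intro mult_mono xy) (auto simp: \<eta>_def B0 less_imp_le)
    also have "\<dots> \<le> B*w/2 + M"
    proof -
      have "B*M \<le> 1*M" using A1 M0 by (intro mult_right_mono) auto
      then show ?thesis by (simp add: algebra_simps)
    qed
    also have "\<dots> < B*w - 2*M"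
    proof -
      have "B * w3 \<le> B * w" using False B0 by simp
      then show ?thesis using w3 by linarith
    qed
    also have "B*w - 2*M \<le> f w"
    proof -
      have "A * x w \<ge> - M"
      proof -
        have "\<bar>A * x w\<bar> \<le> 1 * M" unfolding abs_mult using A0 A1 bx[of w] M0
          by (intro mult_mono) auto
        then show ?thesis by (simp add: abs_le_iff)
      qed
      moreover have "B * y w \<ge> B * w - M"
      proof -
        have "B * Im (Q w) \<ge> - M"
        proof -
          have "\<bar>B * Im (Q w)\<bar> \<le> 1 * M" unfolding abs_mult using B0 A1 bi[of w] M0
            by (intro mult_mono) auto
          then show ?thesis by (simp add: abs_le_iff)
        qed
        then show ?thesis unfolding y_def by (simp add: algebra_simps)
      qed
      ultimately show ?thesis unfolding f_def by linarith
    qed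
    finally show ?thesis .
  qed
  define w2 where "w2 = M + 1"
  have ypos: "y w > 0" if "w \<ge> w2" for w
    using bi[of w] that unfolding y_def w2_def by (auto simp: abs_le_iff)
  show ?thesis
    unfolding eventually_at_right_field
  proof (intro exI[of _ "\<eta> * w1"] conjI allI impI)
    show "0 < \<eta> * w1" using eta0 w1 by simp
    fix a :: real assume a: "0 < a" "a < \<eta> * w1"
    define L where "L = (1-\<gamma>) * arctan (a/w1)"
    have L0: "L > 0" unfolding L_def using g1 a w1 by simp
    show "eventually (\<lambda>b. \<forall>w\<ge>0. cos (phi (2*\<theta>/pi) a b w) * Re (Q w)
        + sin (phi (2*\<theta>/pi) a b w) * (w + Im (Q w)) > 0) at_top"
      unfolding eventually_at_top_linorder
    proof (rule exI[of _ "max (w2/\<eta>) (w1/L) + 1"], rule allI, rule impI)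
      fix b assume b: "max (w2/\<eta>) (w1/L) + 1 \<le> b"
      have b0: "b > 0" using b eta0 L0 w1 M0 unfolding w2_def
        by (smt (verit) divide_pos_pos max.cobounded1)
      have bw2: "w2/b \<le> \<eta>"
      proof -
        have "w2/\<eta> \<le> b" using b by linarith
        then show ?thesis using eta0 b0 by (simp add: field_simps)
      qed
      have bw1: "w1/b \<le> L"
      proof -
        have "w1/L \<le> b" using b by linarith
        then show ?thesis using L0 b0 by (simp add: field_simps)
      qed
      show "\<forall>w\<ge>0. cos (phi (2*\<theta>/pi) a b w) * Re (Q w)
        + sin (phi (2*\<theta>/pi) a b w) * (w + Im (Q w)) > 0"
      proof (intro allI impI)
        fix w :: real assume w0: "0 \<le> w"
        define F where "F = phi \<gamma> a b w"
        have goal: "cos F * x w + sin F * y w > 0"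
        proof (cases "w = 0")
          case True
          then show ?thesis using xpos[of 0] w1 by (simp add: F_def phi_def y_def)
        next
          case False
          then have w: "w > 0" using w0 by simp
          define u where "u = (1-\<gamma>) * arctan (a/w)"
          define v where "v = \<gamma> * arctan (w/b)"
          have inv: "arctan (w/a) = pi/2 - arctan (a/w)"
            using arctan_inverse[of "w/a"] w a by simp
          have Fuv: "F = t - u + v" unfolding F_def phi_def u_def v_def inv using tg
            by (simp add: algebra_simps)
          have u0: "u \<ge> 0" unfolding u_def using g1 a w by simp
          have v0: "v \<ge> 0" unfolding v_def using g0 b0 w by simp
          have vle: "v \<le> w/b"
          proof -
            have "v \<le> 1 * arctan (w/b)" unfolding v_def using g1 b0 w
              by (intro mult_right_mono) auto
            also have "\<dots> \<le> w/b" using arctan_le_self[of "w/b"] b0 w by simp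
            finally show ?thesis .
          qed
          have Fpos: "F > 0"
          proof -
            have "(1-\<gamma>) * arctan (w/a) > 0" using g1 a w by simp
            moreover have "\<gamma> * arctan (w/b) \<ge> 0" using g0 b0 w by simp
            ultimately show ?thesis unfolding F_def phi_def by linarith
          qed
          have Flt: "F < pi/2"
          proof -
            have "(1-\<gamma>) * arctan (w/a) < (1-\<gamma>) * (pi/2)" using g1 arctan_ubound by simp
            moreover have "\<gamma> * arctan (w/b) \<le> \<gamma> * (pi/2)"
              using g0 arctan_ubound[of "w/b"] by (intro mult_left_mono) auto
            ultimately show ?thesis unfolding F_def phi_def by (simp add: algebra_simps)
          qed
          show ?thesis
          proof (cases "w \<le> w1")
            case True
            have "v \<le> L"
            proof -
              have "w/b \<le> w1/b" using True b0 by (simp add: divide_right_mono)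
              then show ?thesis using vle bw1 by linarith
            qed
            also have "L \<le> u" unfolding L_def u_def using g1 a w True w1
              by (intro mult_left_mono arctan_monotone') (auto simp: divide_left_mono)
            finally have "F \<le> t" using Fuv by linarith
            then show ?thesis
              using comb1[OF B0 At Fpos _ _ xpos[OF w0 True] cnd'[OF w]] t0 by linarith
          next
            case False
            have "u \<le> \<eta>"
            proof -
              have "u \<le> 1 * arctan (a/w)" unfolding u_def using g0 g1 a w
                by (intro mult_right_mono) auto
              also have "\<dots> \<le> a/w" using arctan_le_self[of "a/w"] a w by simp
              also have "\<dots> \<le> a/w1" using False a w1 by (simp add: divide_left_mono)
              also have "\<dots> \<le> \<eta>" using a w1 by (simp add: field_simps)
              finally show ?thesis by simp
            qed
            then have Fge: "F \<ge> t - \<eta>" using Fuv v0 by linarith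
            show ?thesis
            proof (cases "F \<le> t + \<eta>")
              case True
              then have "\<bar>F - t\<bar> \<le> \<eta>" using Fge by linarith
              moreover have "w1 \<le> w" using False by simp
              ultimately show ?thesis using comb3[OF At _ P1[of w, unfolded f_def]] by blast
            next
              case False2: False
              have "w > w2"
              proof (rule ccontr)
                assume "\<not> w > w2"
                then have "w/b \<le> w2/b" using b0 by (simp add: divide_right_mono)
                then show False using vle bw2 Fuv u0 False2 by linarith
              qed
              then have yp: "y w > 0" using ypos by simp
              have "t < pi/2" using False2 Flt eta0 by linarith
              then have "\<theta> > 0" unfolding t_def by simp
              then have Ap: "A > 0" unfolding A_def using th by (intro sin_gt_zero) auto
              show ?thesis
                using comb2[OF Ap At _ Flt _ yp cnd'[OF w]] False2 eta0 t0 by linarith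
            qed
          qed
        qed
        then show "cos (phi (2*\<theta>/pi) a b w) * Re (Q w)
          + sin (phi (2*\<theta>/pi) a b w) * (w + Im (Q w)) > 0"
          unfolding F_def \<gamma>_def x_def y_def .
      qed
    qed
  qed
qed


lemma pos_lower:
  fixes f :: "real \<Rightarrow> real"
  assumes cont: "continuous_on UNIV f" and pos: "\<forall>x. f x > 0"
    and lt: "(f \<longlongrightarrow> l) at_top" "l > 0" and lb: "(f \<longlongrightarrow> l') at_bot" "l' > 0"
  shows "\<exists>e>0. \<forall>x. f x \<ge> e"
proof -
  have "l/2 < l" using lt by simp
  then have "eventually (\<lambda>x. f x > l/2) at_top" using order_tendstoD(1)[OF lt(1)] by blast
  then obtain N where N: "\<forall>x\<ge>N. f x > l/2" unfolding eventually_at_top_linorder by auto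
  have "l'/2 < l'" using lb by simp
  then have "eventually (\<lambda>x. f x > l'/2) at_bot" using order_tendstoD(1)[OF lb(1)] by blast
  then obtain N' where N': "\<forall>x\<le>N'. f x > l'/2" unfolding eventually_at_bot_linorder by auto
  define u where "u = min N N'"
  define v where "v = max N N'"
  have uv: "u \<le> v" unfolding u_def v_def by simp
  have "\<exists>x\<in>{u..v}. \<forall>y\<in>{u..v}. f x \<le> f y"
    by (rule continuous_attains_inf[OF compact_Icc]) (use uv continuous_on_subset[OF cont] in auto)
  then obtain xm where xm: "xm \<in> {u..v}" "\<forall>x\<in>{u..v}. f xm \<le> f x" by blast
  define e where "e = min (f xm) (min (l/2) (l'/2))"
  have "e > 0" unfolding e_def using pos lt lb by simp
  moreover have "\<forall>x. f x \<ge> e"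
  proof
    fix x
    show "f x \<ge> e"
    proof (cases "x \<ge> N")
      case True then show ?thesis using N e_def by fastforce
    next
      case False
      show ?thesis
      proof (cases "x \<le> N'")
        case True then show ?thesis using N' e_def by fastforce
      next
        case False2: False
        then have "x \<in> {u..v}" using False unfolding u_def v_def by auto
        then show ?thesis using xm e_def by fastforce
      qed
    qed
  qed
  ultimately show ?thesis by blast
qed

lemma finite_min_pos:
  fixes P :: "nat \<Rightarrow> real \<Rightarrow> bool"
  assumes "\<forall>i<n. \<exists>e>0. P i e" and mono: "\<And>i e e'. P i e \<Longrightarrow> 0 < e' \<Longrightarrow> e' \<le> e \<Longrightarrow> P i e'"
  shows "\<exists>e>0. \<forall>i<n. P i e"
  using assms(1)
proof (induction n)
  case 0 then show ?case by (intro exI[of _ 1]) auto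
next
  case (Suc n)
  then obtain e where e: "e > 0" "\<forall>i<n. P i e" by auto
  obtain e' where e': "e' > 0" "P n e'" using Suc.prems by auto
  have "\<forall>i<Suc n. P i (min e e')"
  proof (intro allI impI)
    fix i assume "i < Suc n"
    then consider "i < n" | "i = n" by linarith
    then show "P i (min e e')"
      by cases (use e e' mono in auto)
  qed
  then show ?case using e e' by (intro exI[of _ "min e e'"]) auto
qed

lemma sym_re:
  assumes "\<forall>s\<in>cRHP. F (cnj s) = cnj (F s)" "\<forall>w\<ge>0. P (Re (F (\<i> * of_real w)))"
  shows "\<forall>w. P (Re (F (\<i> * of_real w)))"
proof
  fix w :: real
  show "P (Re (F (\<i> * of_real w)))"
  proof (cases "w \<ge> 0")
    case True then show ?thesis using assms by blast
  next
    case False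
    have c: "cnj (\<i> * of_real (-w)) = \<i> * of_real w" by (simp add: complex_eq_iff)
    have "F (cnj (\<i> * of_real (-w))) = cnj (F (\<i> * of_real (-w)))"
      using assms(1) iomega_cRHP by blast
    then have "F (\<i> * of_real w) = cnj (F (\<i> * of_real (-w)))" by (simp only: c)
    then have eqRe: "Re (F (\<i> * of_real w)) = Re (F (\<i> * of_real (-w)))" by simp
    have h: "P (Re (F (\<i> * of_real (-w))))" by (rule assms(2)[rule_format]) (use False in simp)
    show ?thesis by (subst eqRe) (rule h)
  qed
qed


lemma cond_conv:
  assumes "w > 0"
  shows "Re (exp (\<i> * of_real \<theta>) * (1 + q / (\<i> * of_real w))) = (sin \<theta> * Re q + cos \<theta> * (w + Im q)) / w"
  using assms by (simp add: exp_Euler cos_of_real sin_of_real Re_divide field_simps power2_eq_square)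

theorem lemma5:
  fixes p :: "nat \<Rightarrow> complex \<Rightarrow> complex" and n :: nat and \<theta> :: real
  assumes A0p: "\<forall>i<n. A0 (p i)"
    and realp: "\<forall>i<n. \<forall>x::real. x > 0 \<longrightarrow> p i (of_real x) \<in> \<real>"
    and pos0: "\<forall>i<n. bval (p i) 0 \<in> \<real> \<and> Re (bval (p i) 0) > 0"
    and th: "0 \<le> \<theta>" "\<theta> < pi / 2"
    and cond: "\<forall>i<n. \<forall>\<omega>::real. \<omega> > 0 \<longrightarrow>
       Re (exp (\<i> * of_real \<theta>) * (1 + bval (p i) (\<i> * of_real \<omega>) / (\<i> * of_real \<omega>))) > 0"
  shows "\<exists>h. PR h \<and> A0 h \<and> (\<forall>i<n. p i \<in> Pset h)"
proof -
  define \<gamma> where "\<gamma> = 2*\<theta>/pi"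
  have g0: "0 \<le> \<gamma>" unfolding \<gamma>_def using th by simp
  have g1: "\<gamma> < 1" unfolding \<gamma>_def using th pi_gt_zero by (simp add: field_simps)
  have "\<forall>i. \<exists>G. i < n \<longrightarrow> (\<forall>s\<in>RHP. G s = p i s) \<and> continuous_on cRHP G \<and> (\<exists>L. (G \<longlongrightarrow> L) FI)"
    using A0p unfolding A0_def by blast
  then obtain P where P: "\<forall>i. i < n \<longrightarrow> (\<forall>s\<in>RHP. P i s = p i s) \<and> continuous_on cRHP (P i) \<and> (\<exists>L. (P i \<longlongrightarrow> L) FI)"
    by metis
  then have "\<forall>i. \<exists>L. i < n \<longrightarrow> (P i \<longlongrightarrow> L) FI" by blast
  then obtain L where limP: "\<And>i. i < n \<Longrightarrow> (P i \<longlongrightarrow> L i) FI" by metis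
  have eqP: "\<And>i s. i < n \<Longrightarrow> s \<in> RHP \<Longrightarrow> P i s = p i s" using P by blast
  have contP: "\<And>i. i < n \<Longrightarrow> continuous_on cRHP (P i)" using P by blast
  have holp: "\<And>i. i < n \<Longrightarrow> p i holomorphic_on RHP" using A0p unfolding A0_def Hinf_def by blast
  have bvalP: "\<And>i z. i < n \<Longrightarrow> z \<in> cRHP \<Longrightarrow> bval (p i) z = P i z"
    using bval_eq contP eqP by blast
  have reflP: "\<And>i. i < n \<Longrightarrow> \<forall>z\<in>cRHP. P i (cnj z) = cnj (P i z)"
    using reflect_ext contP P reflect holp realp by blast
  have contQ: "\<And>i. i < n \<Longrightarrow> continuous_on UNIV (\<lambda>w::real. P i (\<i> * of_real w))"
    by (rule continuous_on_compose2[OF contP]) (auto intro!: continuous_intros)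
  have ev_i: "eventually (\<lambda>a. eventually (\<lambda>b. \<forall>w\<ge>0.
     cos (phi \<gamma> a b w) * Re (P i (\<i> * of_real w)) + sin (phi \<gamma> a b w) * (w + Im (P i (\<i> * of_real w))) > 0) at_top) (at_right 0)"
    if i: "i < n" for i
  proof -
    have "bounded (P i ` cRHP)" using bounded_ext[OF contP[OF i] limP[OF i]] .
    then obtain M where M: "\<forall>z\<in>cRHP. norm (P i z) \<le> M" unfolding bounded_iff by auto
    show ?thesis unfolding \<gamma>_def
    proof (rule core[OF contQ[OF i] _ _ th])
      show "\<forall>w. norm (P i (\<i> * of_real w)) \<le> M" using M by simp
      show "Re (P i (\<i> * of_real 0)) > 0" using pos0[rule_format, OF i] bvalP[OF i, of 0] by (simp add: cRHP_def)
      show "\<forall>w>0. sin \<theta> * Re (P i (\<i> * of_real w)) + cos \<theta> * (w + Im (P i (\<i> * of_real w))) > 0"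
      proof (intro allI impI)
        fix w :: real assume w: "w > 0"
        have "Re (exp (\<i> * of_real \<theta>) * (1 + P i (\<i> * of_real w) / (\<i> * of_real w))) > 0"
          using cond i w bvalP[OF i iomega_cRHP] by metis
        then have "(sin \<theta> * Re (P i (\<i> * of_real w)) + cos \<theta> * (w + Im (P i (\<i> * of_real w)))) / w > 0"
          by (simp only: cond_conv[OF w])
        then show "sin \<theta> * Re (P i (\<i> * of_real w)) + cos \<theta> * (w + Im (P i (\<i> * of_real w))) > 0"
          using w by (simp add: zero_less_divide_iff)
      qed
    qed
  qed
  have "eventually (\<lambda>a. \<forall>i\<in>{..<n}. eventually (\<lambda>b. \<forall>w\<ge>0.
     cos (phi \<gamma> a b w) * Re (P i (\<i> * of_real w)) + sin (phi \<gamma> a b w) * (w + Im (P i (\<i> * of_real w))) > 0) at_top) (at_right 0)"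
    by (rule eventually_ball_finite) (simp, intro ballI ev_i, simp)
  then obtain a0 where a0: "a0 > 0" "\<forall>a>0. a < a0 \<longrightarrow> (\<forall>i\<in>{..<n}. eventually (\<lambda>b. \<forall>w\<ge>0.
     cos (phi \<gamma> a b w) * Re (P i (\<i> * of_real w)) + sin (phi \<gamma> a b w) * (w + Im (P i (\<i> * of_real w))) > 0) at_top)"
    unfolding eventually_at_right_field by auto
  define a where "a = a0/2"
  have a: "a > 0" "a < a0" using a0 a_def by auto
  have "eventually (\<lambda>b. \<forall>i\<in>{..<n}. \<forall>w\<ge>0.
     cos (phi \<gamma> a b w) * Re (P i (\<i> * of_real w)) + sin (phi \<gamma> a b w) * (w + Im (P i (\<i> * of_real w))) > 0) at_top"
    by (rule eventually_ball_finite) (simp, intro ballI, erule a0(2)[rule_format, OF a])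
  then obtain N where N: "\<forall>b\<ge>N. \<forall>i\<in>{..<n}. \<forall>w\<ge>0.
     cos (phi \<gamma> a b w) * Re (P i (\<i> * of_real w)) + sin (phi \<gamma> a b w) * (w + Im (P i (\<i> * of_real w))) > 0"
    unfolding eventually_at_top_linorder by auto
  define b where "b = max N 1"
  have b: "b > 0" "b \<ge> N" unfolding b_def by auto
  have posb: "\<And>i w. i < n \<Longrightarrow> w \<ge> 0 \<Longrightarrow>
     cos (phi \<gamma> a b w) * Re (P i (\<i> * of_real w)) + sin (phi \<gamma> a b w) * (w + Im (P i (\<i> * of_real w))) > 0"
    using N[rule_format, OF b(2)] by simp
  define k where "k = kk a b \<gamma>"
  define h where "h s = s * k s" for s
  define G where "G i s = k s * (s + P i s)" for i s
  have holk: "k holomorphic_on RHP" unfolding k_def using kk_hol a b by blast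
  have contk: "continuous_on cRHP k" unfolding k_def using kk_cont a b by blast
  have limh: "(h \<longlongrightarrow> 1) FI" unfolding h_def k_def using kk_lim(1)[OF a(1) b(1)] by simp
  have limk: "(k \<longlongrightarrow> 0) FI" unfolding k_def using kk_lim(2)[OF a(1) b(1)] by simp
  have cnjk: "\<And>s. s \<in> cRHP \<Longrightarrow> k (cnj s) = cnj (k s)" unfolding k_def
    using kk_cnj[OF a(1) b(1)] by (simp add: cRHP_def)
  have realk: "\<And>x. x \<ge> 0 \<Longrightarrow> k (of_real x) \<in> \<real>" unfolding k_def
    using kk_real[OF a(1) b(1)] by simp
  have Gpos0: "Re (G i (\<i> * of_real w)) > 0" if i: "i < n" and w: "w \<ge> 0" for i w
  proof -
    obtain \<rho> where \<rho>: "\<rho> > 0" "Re (kk a b \<gamma> (\<i> * of_real w) * (\<i> * of_real w + P i (\<i> * of_real w))) =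
     \<rho> * (cos ((1-\<gamma>) * arctan (w/a) + \<gamma> * arctan (w/b)) * Re (\<i> * of_real w + P i (\<i> * of_real w))
        + sin ((1-\<gamma>) * arctan (w/a) + \<gamma> * arctan (w/b)) * Im (\<i> * of_real w + P i (\<i> * of_real w)))"
      using kk_boundary[OF a(1) b(1)] by blast
    then have "Re (G i (\<i> * of_real w)) = \<rho> * (cos (phi \<gamma> a b w) * Re (P i (\<i> * of_real w))
       + sin (phi \<gamma> a b w) * (w + Im (P i (\<i> * of_real w))))"
      unfolding G_def k_def phi_def by simp
    then show ?thesis using \<rho>(1) posb[OF i w] by simp
  qed
  have Gcnj: "\<forall>s\<in>cRHP. G i (cnj s) = cnj (G i s)" if i: "i < n" for i
    unfolding G_def using cnjk reflP[OF i] by simp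
  have Gpos: "\<forall>w. Re (G i (\<i> * of_real w)) > 0" if i: "i < n" for i
  proof -
    have "\<forall>w\<ge>0. Re (G i (\<i> * of_real w)) > 0" using Gpos0[OF i] by simp
    then show ?thesis using sym_re[OF Gcnj[OF i], where P="\<lambda>r. 0 < r"] by simp
  qed
  have contG: "continuous_on cRHP (G i)" if i: "i < n" for i
    unfolding G_def by (intro continuous_intros contk contP[OF i])
  have limG: "(G i \<longlongrightarrow> 1) FI" if i: "i < n" for i
  proof -
    have "((\<lambda>s. h s + k s * P i s) \<longlongrightarrow> 1 + 0 * L i) FI"
      by (intro tendsto_intros limh limk limP[OF i])
    moreover have "(\<lambda>s. h s + k s * P i s) = G i" unfolding G_def h_def by (auto simp: algebra_simps)
    ultimately show ?thesis by simp
  qed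
  have "\<forall>i<n. \<exists>e>0. \<forall>w. Re (G i (\<i> * of_real w)) \<ge> e"
  proof (intro allI impI)
    fix i assume i: "i < n"
    show "\<exists>e>0. \<forall>w. Re (G i (\<i> * of_real w)) \<ge> e"
    proof (rule pos_lower)
      show "continuous_on UNIV (\<lambda>w. Re (G i (\<i> * of_real w)))"
        by (intro continuous_intros continuous_on_compose2[OF contG[OF i]]) auto
      show "\<forall>w. Re (G i (\<i> * of_real w)) > 0" using Gpos[OF i] .
      have lR: "((\<lambda>s. Re (G i s)) \<longlongrightarrow> Re 1) FI" by (intro tendsto_Re limG[OF i])
      show "((\<lambda>w. Re (G i (\<i> * of_real w))) \<longlongrightarrow> 1) at_top"
        using filterlim_compose[OF lR filterlim_iomega_top] by simp
      show "((\<lambda>w. Re (G i (\<i> * of_real w))) \<longlongrightarrow> 1) at_bot"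
        using filterlim_compose[OF lR filterlim_iomega_bot] by simp
    qed auto
  qed
  then have "\<exists>e>0. \<forall>i<n. \<forall>w. Re (G i (\<i> * of_real w)) \<ge> e"
    by (rule finite_min_pos) (meson order_trans)
  then obtain \<epsilon> where eps: "\<epsilon> > 0" "\<forall>i<n. \<forall>w. Re (G i (\<i> * of_real w)) \<ge> \<epsilon>"
    by blast
  have holh: "h holomorphic_on RHP" unfolding h_def by (intro holomorphic_intros holk)
  have conth: "continuous_on cRHP h" unfolding h_def by (intro continuous_intros contk)
  have realh: "\<And>x::real. x > 0 \<Longrightarrow> h (of_real x) \<in> \<real>"
    unfolding h_def using realk by (simp add: Reals_mult)
  have boundedh: "bounded (h ` RHP)"
    using bounded_subset[OF bounded_ext[OF conth limh]] RHP_sub by blast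
  have hpos0: "Re (h (\<i> * of_real w)) \<ge> 0" if w: "w \<ge> 0" for w
  proof -
    obtain \<rho> where \<rho>: "\<rho> > 0" "Re (kk a b \<gamma> (\<i> * of_real w) * (\<i> * of_real w)) =
     \<rho> * (cos ((1-\<gamma>) * arctan (w/a) + \<gamma> * arctan (w/b)) * Re (\<i> * of_real w)
        + sin ((1-\<gamma>) * arctan (w/a) + \<gamma> * arctan (w/b)) * Im (\<i> * of_real w))"
      using kk_boundary[OF a(1) b(1)] by blast
    define F where "F = (1-\<gamma>) * arctan (w/a) + \<gamma> * arctan (w/b)"
    have F0: "F \<ge> 0" unfolding F_def using g0 g1 w a b by simp
    have "(1-\<gamma>) * arctan (w/a) \<le> (1-\<gamma>) * (pi/2)"
      using g1 arctan_ubound[of "w/a"] by (intro mult_left_mono) auto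
    moreover have "\<gamma> * arctan (w/b) \<le> \<gamma> * (pi/2)"
      using g0 arctan_ubound[of "w/b"] by (intro mult_left_mono) auto
    ultimately have "F \<le> pi/2" unfolding F_def by (simp add: algebra_simps)
    then have "sin F \<ge> 0" using F0 by (intro sin_ge_zero) auto
    then have "Re (h (\<i> * of_real w)) = \<rho> * (sin F * w)"
      using \<rho> unfolding h_def k_def F_def by (simp add: mult.commute)
    then show ?thesis using \<rho>(1) \<open>sin F \<ge> 0\<close> w by simp
  qed
  have hcnj: "\<forall>s\<in>cRHP. h (cnj s) = cnj (h s)" unfolding h_def using cnjk by simp
  have hpos: "\<forall>w. Re (h (\<i> * of_real w)) \<ge> 0"
  proof -
    have "\<forall>w\<ge>0. Re (h (\<i> * of_real w)) \<ge> 0" using hpos0 by simp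
    then show ?thesis using sym_re[OF hcnj, where P="\<lambda>r. 0 \<le> r"] by simp
  qed
  have PRh: "PR h"
    unfolding PR_def using holh realh hp_max[OF holh conth _ limh hpos] by auto
  have A0h: "A0 h"
    unfolding A0_def Hinf_def using holh boundedh conth limh by blast
  have Pset: "p i \<in> Pset h" if i: "i < n" for i
  proof -
    define g where "g s = h s * (1 + p i s / s)" for s
    have eqG: "\<forall>s\<in>RHP. G i s = g s"
    proof
      fix s assume s: "s \<in> RHP"
      then have "s \<noteq> 0" by (auto simp: RHP_def)
      then show "G i s = g s" unfolding G_def g_def h_def using eqP[OF i s]
        by (simp add: field_simps)
    qed
    have holg: "g holomorphic_on RHP" unfolding g_def
      by (intro holomorphic_intros holh holp[OF i]) (auto simp: RHP_def)
    have realg: "\<And>x::real. x > 0 \<Longrightarrow> g (of_real x) \<in> \<real>"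
    proof -
      fix x :: real assume x: "x > 0"
      have "p i (of_real x) \<in> \<real>" using realp i x by blast
      then show "g (of_real x) \<in> \<real>" unfolding g_def using realh[OF x]
        by (intro Reals_mult Reals_add Reals_divide) auto
    qed
    have geps: "\<forall>s\<in>RHP. Re (g s) \<ge> \<epsilon>"
      using hp_max[OF holg contG[OF i] eqG limG[OF i]] eps(2) i by blast
    have boundedg: "bounded (g ` RHP)"
    proof -
      have "g ` RHP = G i ` RHP" using eqG by (auto simp: image_def)
      also have "\<dots> \<subseteq> G i ` cRHP" using RHP_sub by blast
      finally show ?thesis using bounded_subset[OF bounded_ext[OF contG[OF i] limG[OF i]]] by blast
    qed
    have PRg: "PR g" unfolding PR_def using holg realg geps eps(1) by force
    have A0g: "A0 g" unfolding A0_def Hinf_def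
      using holg boundedg contG[OF i] eqG limG[OF i] by blast
    have PRg': "PR (\<lambda>s. g s - of_real \<epsilon>)" unfolding PR_def
    proof (intro conjI allI impI ballI)
      show "(\<lambda>s. g s - of_real \<epsilon>) holomorphic_on RHP" by (intro holomorphic_intros holg)
      fix x :: real assume "x > 0"
      then show "g (of_real x) - of_real \<epsilon> \<in> \<real>" using realg by (intro Reals_diff) auto
    next
      fix s assume "s \<in> RHP"
      then show "0 \<le> Re (g s - of_real \<epsilon>)" using geps by simp
    qed
    have "ESPR g" unfolding ESPR_def using PRg A0g PRg' eps(1) by blast
    moreover have "Hinf (p i)" using A0p i unfolding A0_def by blast
    moreover have "bval (p i) 0 \<noteq> 0" using pos0 i by force
    ultimately show ?thesis unfolding Pset_def g_def by simp
  qed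
  show ?thesis using PRh A0h Pset by blast
qed

end
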